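(* Let $k$ be a field, $Q,q\in k^\times$, $n,d\geq1$, and consider the right action of $\mathcal H^B_{Q,q}(d)$ on $V_n^{\otimes d}$. For each $1\le i\le d$, every eigenvalue of $K_i=T_{i-1}\cdots T_1T_0T_1\cdots T_{i-1}$ acting on $V_n^{\otimes d}$ is of the form $-Qq^{2j}$ or $Q^{-1}q^{2j}$ for some integer $j$ with $|j|<i$.
   Context: $\mathcal H^B_{Q,q}(d)$ is the $k$-algebra generated by $T_0,\dots,T_{d-1}$ with relations $(T_0+Q)(T_0-Q^{-1})=0$; $(T_i+q)(T_i-q^{-1})=0$ ($i>0$); $T_iT_{i+1}T_i=T_{i+1}T_iT_{i+1}$ ($i>0$); $T_0T_1T_0T_1=T_1T_0T_1T_0$; $T_iT_j=T_jT_i$ ($|i-j|>1$). For $n=2r$ let $\mathbb I_n=\{-\tfrac{2r-1}{2},\dots,-\tfrac12,\tfrac12,\dots,\tfrac{2r-1}{2}\}$ and for $n=2r+1$ let $\mathbb I_n=\{-r,\dots,0,\dots,r\}$. $V_n$ is the $k$-vector space with basis $\{v_i: i\in\mathbb I_n\}$. Define $R_q:V_n\otimes V_n\to V_n\otimes V_n$ by $v_i\otimes v_j\mapsto q^{-1}v_i\otimes v_j$ if $i=j$, $v_j\otimes v_i$ if $i<j$, $v_j\otimes v_i+(q^{-1}-q)v_i\otimes v_j$ if $i>j$; and $K_Q:V_n\to V_n$ by $v_i\mapsto Q^{-1}v_i$ if $i=0$, $v_{-i}$ if $i>0$, $v_{-i}+(Q^{-1}-Q)v_i$ if $i<0$.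 The right action of $\mathcal H^B_{Q,q}(d)$ on $V_n^{\otimes d}$ is given by letting $T_i$ ($i>0$) act as $R_q$ on tensor factors $i,i+1$ (identity elsewhere) and $T_0$ act as $K_Q$ on the first tensor factor (identity elsewhere). *)

theory Defs
  imports Main
begin

text \<open>Encoding: a basis index i of I_n (integers or half-integers) is stored as the
  integer 2i. This encoding preserves order, sign and negation.\<close>

definition Idx :: "nat \<Rightarrow> int set" where
  "Idx n = {a. \<bar>a\<bar> \<le> int n - 1 \<and> even (a + int n - 1)}"

text \<open>Basis of V_n^{\<otimes>d}: words (i_1,...,i_d), i.e. lists of length d over I_n.\<close>
definition Words :: "nat \<Rightarrow> nat \<Rightarrow> int list set" where
  "Words n d = {w. length w = d \<and> set w \<subseteq> Idx n}"

text \<open>Vectors of V_n^{\<otimes>d}: coefficient functions supported on the basis words.\<close>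
definition Vspace :: "nat \<Rightarrow> nat \<Rightarrow> (int list \<Rightarrow> 'k::field) set" where
  "Vspace n d = {v. \<forall>u. u \<notin> Words n d \<longrightarrow> v u = 0}"

text \<open>Coefficient of v_{i'} (x) v_{j'} in R_q(v_i (x) v_j).\<close>
definition Rcoeff :: "'k::field \<Rightarrow> int \<Rightarrow> int \<Rightarrow> int \<Rightarrow> int \<Rightarrow> 'k" where
  "Rcoeff q i j i' j' =
    (if i = j then (if i' = i \<and> j' = j then inverse q else 0)
     else if i < j then (if i' = j \<and> j' = i then 1 else 0)
     else (if i' = j \<and> j' = i then 1 else 0)
          + (if i' = i \<and> j' = j then inverse q - q else 0))"

text \<open>Coefficient of v_{i'} in K_Q(v_i).\<close>
definition Kcoeff :: "'k::field \<Rightarrow> int \<Rightarrow> int \<Rightarrow> 'k" where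
  "Kcoeff Q i i' =
    (if i = 0 then (if i' = 0 then inverse Q else 0)
     else if i > 0 then (if i' = - i then 1 else 0)
     else (if i' = - i then 1 else 0) + (if i' = i then inverse Q - Q else 0))"

text \<open>Matrix coefficient (basis word w to basis word u) of the generator T_p acting on
  V_n^{\<otimes>d}: T_0 acts by K_Q on the first tensor factor (list position 0);
  T_p for p > 0 acts by R_q on tensor factors p, p+1 (list positions p-1, p).\<close>
definition Tcoeff :: "'k::field \<Rightarrow> 'k \<Rightarrow> nat \<Rightarrow> int list \<Rightarrow> int list \<Rightarrow> 'k" where
  "Tcoeff Q q p w u =
    (if p = 0 then
       (if drop 1 w = drop 1 u then Kcoeff Q (w ! 0) (u ! 0) else 0)
     else
       (if take (p - 1) w = take (p - 1) u \<and> drop (p + 1) w = drop (p + 1) u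
        then Rcoeff q (w ! (p - 1)) (w ! p) (u ! (p - 1)) (u ! p) else 0))"

text \<open>Right action of the generator T_p on a vector v (row vector times matrix).\<close>
definition actT :: "nat \<Rightarrow> nat \<Rightarrow> 'k::field \<Rightarrow> 'k \<Rightarrow> nat \<Rightarrow> (int list \<Rightarrow> 'k) \<Rightarrow> (int list \<Rightarrow> 'k)" where
  "actT n d Q q p v =
     (\<lambda>u. if u \<in> Words n d then (\<Sum>w\<in>Words n d. v w * Tcoeff Q q p w u) else 0)"

text \<open>Right action of the word T_{a_1} T_{a_2} ... T_{a_m}: v . T_{a_1} ... T_{a_m}.\<close>
fun actWord :: "nat \<Rightarrow> nat \<Rightarrow> 'k::field \<Rightarrow> 'k \<Rightarrow> nat list \<Rightarrow> (int list \<Rightarrow> 'k) \<Rightarrow> (int list \<Rightarrow> 'k)" where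
  "actWord n d Q q [] v = v"
| "actWord n d Q q (a # as) v = actWord n d Q q as (actT n d Q q a v)"

definition Kword :: "nat \<Rightarrow> nat list" where
  "Kword i = rev [1..<i] @ [0] @ [1..<i]"

definition is_eigenvalue_K :: "nat \<Rightarrow> nat \<Rightarrow> 'k::field \<Rightarrow> 'k \<Rightarrow> nat \<Rightarrow> 'k \<Rightarrow> bool" where
  "is_eigenvalue_K n d Q q i lam \<longleftrightarrow>
     (\<exists>v\<in>Vspace n d. v \<noteq> (\<lambda>_. 0) \<and> actWord n d Q q (Kword i) v = (\<lambda>u. lam * v u))"

end

theory Submission
  imports Defs "HOL-Library.Function_Algebras"
begin

type_synonym 'k vec = "int list \<Rightarrow> 'k"

definition sc :: "'k::field \<Rightarrow> 'k vec \<Rightarrow> 'k vec" where "sc a v = (\<lambda>u. a * v u)"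
lemma sc_apply: "sc a v u = a * v u" by (simp add: sc_def)

definition lin :: "('k::field vec \<Rightarrow> 'k vec) \<Rightarrow> bool" where
  "lin A \<longleftrightarrow> (\<forall>x y. A (x + y) = A x + A y) \<and> (\<forall>a x. A (sc a x) = sc a (A x))"

lemma lin_add: "lin A \<Longrightarrow> A (x + y) = A x + A y" by (simp add: lin_def)
lemma lin_sc: "lin A \<Longrightarrow> A (sc a x) = sc a (A x)" by (simp add: lin_def)
lemma lin_zero: "lin A \<Longrightarrow> A 0 = 0"
proof -
  assume "lin A"
  have "A (sc 0 0) = sc 0 (A 0)" using \<open>lin A\<close> by (rule lin_sc)
  then show ?thesis by (simp add: sc_def zero_fun_def)
qed
lemma lin_neg: "lin A \<Longrightarrow> A (- x) = - A x"
proof -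
  assume "lin A"
  have "A (sc (-1) x) = sc (-1) (A x)" using \<open>lin A\<close> by (rule lin_sc)
  moreover have "sc (-1) x = - x" "sc (-1) (A x) = - A x" by (auto simp: sc_def fun_eq_iff sc_apply)
  ultimately show ?thesis by simp
qed
lemma lin_diff: "lin A \<Longrightarrow> A (x - y) = A x - A y"
  using lin_add[of A x "- y"] lin_neg[of A y] by simp
lemma lin_sum: "lin A \<Longrightarrow> A (\<Sum>k\<in>S. f k) = (\<Sum>k\<in>S. A (f k))"
  by (induction S rule: infinite_finite_induct) (auto simp: lin_zero lin_add)

lemma lin_comp: "lin A \<Longrightarrow> lin B \<Longrightarrow> lin (\<lambda>v. A (B v))"
  by (simp add: lin_def)


lemma finite_Idx: "finite (Idx n)"
proof -
  have "Idx n \<subseteq> {-(int n)..int n}" by (auto simp: Idx_def)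
  then show ?thesis using finite_subset by blast
qed

lemma finite_Words: "finite (Words n d)"
proof -
  have "Words n d = {xs. set xs \<subseteq> Idx n \<and> length xs = d}" by (auto simp: Words_def)
  then show ?thesis using finite_lists_length_eq[OF finite_Idx] by simp
qed

lemma lin_actT: "lin (actT n d Q q p)"
  unfolding lin_def actT_def
  by (auto simp: fun_eq_iff sc_apply sum.distrib distrib_right sum_distrib_left mult.assoc)

definition sw :: "nat \<Rightarrow> int list \<Rightarrow> int list" where
  "sw p u = u[p - 1 := u ! p, p := u ! (p - 1)]"
definition ng :: "int list \<Rightarrow> int list" where
  "ng u = u[0 := - (u ! 0)]"

lemma list_eq_upd2:
  assumes "length w = length u" "1 \<le> p" "p < length u"
    "take (p - 1) w = take (p - 1) u" "drop (p + 1) w = drop (p + 1) u"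
  shows "w = u[p - 1 := w ! (p - 1), p := w ! p]"
proof (rule nth_equalityI)
  show "length w = length (u[p - 1 := w ! (p - 1), p := w ! p])" using assms by simp
  fix k assume k: "k < length w"
  show "w ! k = u[p - 1 := w ! (p - 1), p := w ! p] ! k"
  proof (cases "k < p - 1")
    case True
    then have "take (p - 1) w ! k = take (p - 1) u ! k" using assms by simp
    then show ?thesis using True assms k by (simp add: nth_list_update)
  next
    case False
    show ?thesis
    proof (cases "k \<le> p")
      case True then show ?thesis using False assms k by (auto simp: nth_list_update)
    next
      case F2: False
      have "drop (p + 1) w ! (k - (p+1)) = drop (p + 1) u ! (k - (p+1))" using assms by simp
      then show ?thesis using F2 False assms k by (auto simp: nth_list_update)
    qed
  qed
qed

lemma list_eq_upd1:
  assumes "length w = length u" "0 < length u" "drop 1 w = drop 1 u"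
  shows "w = u[0 := w ! 0]"
proof (rule nth_equalityI)
  show "length w = length (u[0 := w ! 0])" using assms by simp
  fix k assume k: "k < length w"
  show "w ! k = u[0 := w ! 0] ! k"
  proof (cases k)
    case 0 then show ?thesis using assms by simp
  next
    case (Suc m)
    have "drop 1 w ! m = drop 1 u ! m" using assms by simp
    then show ?thesis using Suc assms k by (auto simp: nth_list_update)
  qed
qed

lemma Idx_neg: "a \<in> Idx n \<Longrightarrow> - a \<in> Idx n"
  by (auto simp: Idx_def)

lemma Idx_neg_iff[simp]: "- a \<in> Idx n \<longleftrightarrow> a \<in> Idx n"
  using Idx_neg[of a n] Idx_neg[of "- a" n] by auto

lemma sw_Words: "u \<in> Words n d \<Longrightarrow> p < d \<Longrightarrow> sw p u \<in> Words n d"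
  unfolding Words_def sw_def
  by (auto dest!: set_update_subset_insert[THEN subsetD] simp: subset_iff)


lemma Words_len: "u \<in> Words n d \<Longrightarrow> length u = d" by (simp add: Words_def)

lemma Rcoeff_nz:
  assumes "Rcoeff q a b x y \<noteq> 0"
  shows "(a = x \<and> b = y) \<or> (a = y \<and> b = x)"
  using assms unfolding Rcoeff_def by (auto split: if_splits)

lemma Kcoeff_nz:
  assumes "Kcoeff Q a x \<noteq> 0"
  shows "a = x \<or> a = - x"
  using assms unfolding Kcoeff_def by (auto split: if_splits)

lemma actT_pos:
  assumes p: "1 \<le> p" "p < d" and u: "u \<in> Words n d"
  shows "actT n d Q q p v u =
    (if u!(p-1) = u!p then inverse q * v u
     else if u!p < u!(p-1) then v (sw p u) + (inverse q - q) * v u else v (sw p u))"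
proof -
  have len: "length u = d" using u by (rule Words_len)
  have swW: "sw p u \<in> Words n d" using sw_Words[OF u p(2)] .
  have nz: "Tcoeff Q q p w u = 0" if w: "w \<in> Words n d - {u, sw p u}" for w
  proof (rule ccontr)
    assume H: "Tcoeff Q q p w u \<noteq> 0"
    have lw: "length w = d" using w by (auto simp: Words_def)
    from H p have td: "take (p - 1) w = take (p - 1) u" "drop (p + 1) w = drop (p + 1) u"
      and R: "Rcoeff q (w ! (p - 1)) (w ! p) (u ! (p - 1)) (u ! p) \<noteq> 0"
      by (auto simp: Tcoeff_def split: if_splits)
    have weq: "w = u[p - 1 := w ! (p - 1), p := w ! p]"
      using list_eq_upd2[OF _ p(1) _ td] lw len p by simp
    from Rcoeff_nz[OF R] have "w = u \<or> w = sw p u"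
    proof
      assume "w ! (p - 1) = u ! (p - 1) \<and> w ! p = u ! p"
      then have "w = u[p - 1 := u ! (p - 1), p := u ! p]" using weq by simp
      then show ?thesis by simp
    next
      assume "w ! (p - 1) = u ! p \<and> w ! p = u ! (p - 1)"
      then show ?thesis using weq by (simp add: sw_def)
    qed
    then show False using w by auto
  qed
  have "actT n d Q q p v u = (\<Sum>w\<in>Words n d. v w * Tcoeff Q q p w u)"
    using u by (simp add: actT_def)
  also have "\<dots> = (\<Sum>w\<in>{u, sw p u}. v w * Tcoeff Q q p w u)"
    by (rule sum.mono_neutral_right[OF finite_Words]) (use u swW nz in auto)
  also have "\<dots> = (if u!(p-1) = u!p then inverse q * v u
     else if u!p < u!(p-1) then v (sw p u) + (inverse q - q) * v u else v (sw p u))"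
  proof -
    have pp: "p - 1 < p" "p - 1 \<noteq> p" using p by auto
    have s1: "sw p u ! (p - 1) = u ! p" "sw p u ! p = u ! (p - 1)"
      using p len by (auto simp: sw_def nth_list_update)
    have s2: "take (p - 1) (sw p u) = take (p - 1) u" "drop (p + 1) (sw p u) = drop (p + 1) u"
      by (auto simp: sw_def)
    have Tu: "Tcoeff Q q p u u = Rcoeff q (u!(p-1)) (u!p) (u!(p-1)) (u!p)"
      using p by (simp add: Tcoeff_def)
    have Ts: "Tcoeff Q q p (sw p u) u = Rcoeff q (u!p) (u!(p-1)) (u!(p-1)) (u!p)"
      using p s1 s2 by (simp add: Tcoeff_def)
    show ?thesis
    proof (cases "u!(p-1) = u!p")
      case True
      then have "sw p u = u" by (metis sw_def list_update_id)
      then show ?thesis using True Tu by (simp add: Rcoeff_def)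
    next
      case False
      then have ne: "sw p u \<noteq> u" using s1 by auto
      show ?thesis using False ne Tu Ts by (auto simp: Rcoeff_def)
    qed
  qed
  finally show ?thesis .
qed

lemma ng_Words: "u \<in> Words n d \<Longrightarrow> ng u \<in> Words n d"
  by (cases u) (auto simp: Words_def ng_def Idx_neg)

lemma actT_zero:
  assumes d: "0 < d" and u: "u \<in> Words n d"
  shows "actT n d Q q 0 v u =
    (if u!0 = 0 then inverse Q * v u
     else if u!0 < 0 then v (ng u) + (inverse Q - Q) * v u else v (ng u))"
proof -
  have len: "length u = d" using u by (rule Words_len)
  have ngW: "ng u \<in> Words n d" using ng_Words[OF u] .
  have nz: "Tcoeff Q q 0 w u = 0" if w: "w \<in> Words n d - {u, ng u}" for w
  proof (rule ccontr)
    assume H: "Tcoeff Q q 0 w u \<noteq> 0"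
    have lw: "length w = d" using w by (auto simp: Words_def)
    from H have td: "drop 1 w = drop 1 u"
      and R: "Kcoeff Q (w ! 0) (u ! 0) \<noteq> 0"
      by (auto simp: Tcoeff_def split: if_splits)
    have weq: "w = u[0 := w ! 0]"
      using list_eq_upd1[OF _ _ td] lw len d by simp
    from Kcoeff_nz[OF R] have "w = u \<or> w = ng u"
      using weq by (auto simp: ng_def)
    then show False using w by auto
  qed
  have "actT n d Q q 0 v u = (\<Sum>w\<in>Words n d. v w * Tcoeff Q q 0 w u)"
    using u by (simp add: actT_def)
  also have "\<dots> = (\<Sum>w\<in>{u, ng u}. v w * Tcoeff Q q 0 w u)"
    by (rule sum.mono_neutral_right[OF finite_Words]) (use u ngW nz in auto)
  also have "\<dots> = (if u!0 = 0 then inverse Q * v u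
     else if u!0 < 0 then v (ng u) + (inverse Q - Q) * v u else v (ng u))"
  proof -
    have s1: "ng u ! 0 = - (u ! 0)" using len d by (simp add: ng_def)
    have s2: "drop 1 (ng u) = drop 1 u" by (simp add: ng_def)
    have Tu: "Tcoeff Q q 0 u u = Kcoeff Q (u!0) (u!0)" by (simp add: Tcoeff_def)
    have Ts: "Tcoeff Q q 0 (ng u) u = Kcoeff Q (- (u!0)) (u!0)"
      using s1 s2 by (simp add: Tcoeff_def)
    show ?thesis
    proof (cases "u!0 = 0")
      case True
      then have "ng u = u" by (metis ng_def list_update_id minus_zero)
      then show ?thesis using True Tu by (simp add: Kcoeff_def)
    next
      case False
      then have ne: "ng u \<noteq> u" using s1 by auto
      show ?thesis using False ne Tu Ts by (auto simp: Kcoeff_def)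
    qed
  qed
  finally show ?thesis .
qed

lemma actT_out: "u \<notin> Words n d \<Longrightarrow> actT n d Q q p v u = 0"
  by (simp add: actT_def)

lemma actT_Vspace: "actT n d Q q p v \<in> Vspace n d"
  by (simp add: Vspace_def actT_def)


lemma sw_nth1: "1 \<le> p \<Longrightarrow> p < length u \<Longrightarrow> sw p u ! (p - 1) = u ! p"
  by (auto simp: sw_def nth_list_update)
lemma sw_nth2: "1 \<le> p \<Longrightarrow> p < length u \<Longrightarrow> sw p u ! p = u ! (p - 1)"
  by (auto simp: sw_def nth_list_update)
lemma sw_nth_other: "k \<noteq> p - 1 \<Longrightarrow> k \<noteq> p \<Longrightarrow> sw p u ! k = u ! k"
  by (auto simp: sw_def nth_list_update)
lemma sw_sw: "1 \<le> p \<Longrightarrow> p < length u \<Longrightarrow> sw p (sw p u) = u"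
  by (rule nth_equalityI) (auto simp: sw_def nth_list_update)
lemma sw_len[simp]: "length (sw p u) = length u" by (simp add: sw_def)
lemma ng_len[simp]: "length (ng u) = length u" by (simp add: ng_def)
lemma ng_nth0: "0 < length u \<Longrightarrow> ng u ! 0 = - (u ! 0)" by (simp add: ng_def)
lemma ng_nth_other: "k \<noteq> 0 \<Longrightarrow> ng u ! k = u ! k" by (simp add: ng_def)
lemma ng_ng: "ng (ng u) = u"
  by (cases u) (auto simp: ng_def)

lemma quad_pos:
  assumes p: "1 \<le> p" "p < d" and v: "v \<in> Vspace n d" and q: "q \<noteq> 0"
  shows "actT n d Q q p (actT n d Q q p v) = v - sc (q - inverse q) (actT n d Q q p v)"
proof (rule ext)
  fix u
  show "actT n d Q q p (actT n d Q q p v) u = (v - sc (q - inverse q) (actT n d Q q p v)) u"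
  proof (cases "u \<in> Words n d")
    case False
    then show ?thesis using v by (simp add: actT_out Vspace_def sc_apply)
  next
    case True
    have len: "length u = d" using True by (rule Words_len)
    have sW: "sw p u \<in> Words n d" using sw_Words True p by blast
    have e: "sw p u ! (p - 1) = u ! p" "sw p u ! p = u ! (p - 1)" "sw p (sw p u) = u"
      using sw_nth1 sw_nth2 sw_sw p len by auto
    show ?thesis
      using True sW e p q
      by (auto simp: actT_pos algebra_simps sc_apply)
  qed
qed

lemma quad_zero:
  assumes d: "0 < d" and v: "v \<in> Vspace n d" and Q: "Q \<noteq> 0"
  shows "actT n d Q q 0 (actT n d Q q 0 v) = v - sc (Q - inverse Q) (actT n d Q q 0 v)"
proof (rule ext)
  fix u
  show "actT n d Q q 0 (actT n d Q q 0 v) u = (v - sc (Q - inverse Q) (actT n d Q q 0 v)) u"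
  proof (cases "u \<in> Words n d")
    case False
    then show ?thesis using v by (simp add: actT_out Vspace_def sc_apply)
  next
    case True
    have len: "length u = d" using True by (rule Words_len)
    have sW: "ng u \<in> Words n d" using ng_Words True by blast
    have e: "ng u ! 0 = - (u ! 0)" "ng (ng u) = u"
      using ng_nth0 ng_ng d len by auto
    show ?thesis
      using True sW e d Q
      by (auto simp: actT_zero algebra_simps sc_apply)
  qed
qed

lemma comm_pos:
  assumes a: "1 \<le> a" and ab: "a + 2 \<le> b" and b: "b < d" and q: "q \<noteq> 0"
  shows "actT n d Q q a (actT n d Q q b v) = actT n d Q q b (actT n d Q q a v)"
proof (rule ext)
  fix u
  show "actT n d Q q a (actT n d Q q b v) u = actT n d Q q b (actT n d Q q a v) u"
  proof (cases "u \<in> Words n d")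
    case False
    then show ?thesis by (simp add: actT_out)
  next
    case True
    have len: "length u = d" using True by (rule Words_len)
    have ad: "a < d" "1 \<le> b" using a ab b by auto
    have sW: "sw a u \<in> Words n d" "sw b u \<in> Words n d" using sw_Words True ad b by blast+
    have e: "sw a u ! (b - 1) = u ! (b - 1)" "sw a u ! b = u ! b"
      "sw b u ! (a - 1) = u ! (a - 1)" "sw b u ! a = u ! a"
      using sw_nth_other a ab by auto
    have c: "sw b (sw a u) = sw a (sw b u)"
      using a ab b len by (intro nth_equalityI) (auto simp: sw_def nth_list_update)
    show ?thesis
      using True sW e c ad a b
      by (auto simp: actT_pos algebra_simps)
  qed
qed

lemma comm_zero:
  assumes b: "2 \<le> b" "b < d"
  shows "actT n d Q q 0 (actT n d Q q b v) = actT n d Q q b (actT n d Q q 0 v)"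
proof (rule ext)
  fix u
  show "actT n d Q q 0 (actT n d Q q b v) u = actT n d Q q b (actT n d Q q 0 v) u"
  proof (cases "u \<in> Words n d")
    case False
    then show ?thesis by (simp add: actT_out)
  next
    case True
    have len: "length u = d" using True by (rule Words_len)
    have ad: "0 < d" "1 \<le> b" using b by auto
    have sW: "ng u \<in> Words n d" "sw b u \<in> Words n d" using sw_Words ng_Words True b by blast+
    have e: "ng u ! (b - 1) = u ! (b - 1)" "ng u ! b = u ! b"
      "sw b u ! 0 = u ! 0"
      using sw_nth_other ng_nth_other b by auto
    have c: "sw b (ng u) = ng (sw b u)"
      using b len by (intro nth_equalityI) (auto simp: sw_def ng_def nth_list_update)
    show ?thesis
      using True sW e c ad b
      by (auto simp: actT_pos actT_zero algebra_simps)
  qed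
qed


definition R1 :: "'k::field \<Rightarrow> (int\<times>int\<times>int \<Rightarrow> 'k) \<Rightarrow> int\<times>int\<times>int \<Rightarrow> 'k" where
 "R1 q g t = (case t of (a,b,c) \<Rightarrow> if a = b then inverse q * g (a,b,c) else if b < a then g (b,a,c) + (inverse q - q) * g (a,b,c) else g (b,a,c))"
definition R2 :: "'k::field \<Rightarrow> (int\<times>int\<times>int \<Rightarrow> 'k) \<Rightarrow> int\<times>int\<times>int \<Rightarrow> 'k" where
 "R2 q g t = (case t of (a,b,c) \<Rightarrow> if b = c then inverse q * g (a,b,c) else if c < b then g (a,c,b) + (inverse q - q) * g (a,b,c) else g (a,c,b))"
lemma braid_loc: assumes "q \<noteq> 0" shows "R1 q (R2 q (R1 q g)) t = R2 q (R1 q (R2 q g)) t"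
  apply (cases t)
  apply (auto simp: R1_def R2_def algebra_simps assms)
  apply (simp_all add: field_simps assms)
  done

definition K0 :: "'k::field \<Rightarrow> (int\<times>int \<Rightarrow> 'k) \<Rightarrow> int\<times>int \<Rightarrow> 'k" where
 "K0 Q g t = (case t of (a,b) \<Rightarrow> if a = 0 then inverse Q * g (a,b) else if a < 0 then g (-a,b) + (inverse Q - Q) * g (a,b) else g (-a,b))"
definition RR :: "'k::field \<Rightarrow> (int\<times>int \<Rightarrow> 'k) \<Rightarrow> int\<times>int \<Rightarrow> 'k" where
 "RR q g t = (case t of (a,b) \<Rightarrow> if a = b then inverse q * g (a,b) else if b < a then g (b,a) + (inverse q - q) * g (a,b) else g (b,a))"
lemma typeB_loc: assumes "q \<noteq> 0" "Q \<noteq> 0" shows "K0 Q (RR q (K0 Q (RR q g))) t = RR q (K0 Q (RR q (K0 Q g))) t"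
  apply (cases t)
  apply (auto simp: K0_def RR_def algebra_simps assms)
  apply (simp_all add: field_simps assms)
  done

definition L3 :: "nat \<Rightarrow> int list \<Rightarrow> int\<times>int\<times>int \<Rightarrow> int list" where
  "L3 p u t = (case t of (a,b,c) \<Rightarrow> u[p - 1 := a, p := b, p + 1 := c])"
definition loc3 :: "nat \<Rightarrow> nat \<Rightarrow> int list \<Rightarrow> 'k::field vec \<Rightarrow> int\<times>int\<times>int \<Rightarrow> 'k" where
  "loc3 n p u v t = (case t of (a,b,c) \<Rightarrow> if a \<in> Idx n \<and> b \<in> Idx n \<and> c \<in> Idx n then v (L3 p u t) else 0)"

lemma L3_Words:
  assumes "u \<in> Words n d" "p + 1 < d" "a \<in> Idx n" "b \<in> Idx n" "c \<in> Idx n"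
  shows "L3 p u (a,b,c) \<in> Words n d"
  using assms unfolding Words_def L3_def
  by (auto dest!: set_update_subset_insert[THEN subsetD] simp: subset_iff)

lemma loc3_T1:
  assumes u: "u \<in> Words n d" and p: "1 \<le> p" "p + 1 < d"
  shows "loc3 n p u (actT n d Q q p v) = R1 q (loc3 n p u v)"
proof (rule ext)
  fix t :: "int \<times> int \<times> int"
  obtain a b c where t: "t = (a,b,c)" by (cases t) auto
  have len: "length u = d" using u by (rule Words_len)
  show "loc3 n p u (actT n d Q q p v) t = R1 q (loc3 n p u v) t"
  proof (cases "a \<in> Idx n \<and> b \<in> Idx n \<and> c \<in> Idx n")
    case False
    then show ?thesis using t by (auto simp: loc3_def R1_def)
  next
    case True
    have W: "L3 p u (a,b,c) \<in> Words n d" using L3_Words u p True by blast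
    have e: "L3 p u (a,b,c) ! (p - 1) = a" "L3 p u (a,b,c) ! p = b"
      "sw p (L3 p u (a,b,c)) = L3 p u (b,a,c)"
      using p len by (auto simp: L3_def sw_def nth_list_update intro!: nth_equalityI)
    show ?thesis using True t W e p by (auto simp: loc3_def R1_def actT_pos)
  qed
qed

lemma loc3_T2:
  assumes u: "u \<in> Words n d" and p: "1 \<le> p" "p + 1 < d"
  shows "loc3 n p u (actT n d Q q (p + 1) v) = R2 q (loc3 n p u v)"
proof (rule ext)
  fix t :: "int \<times> int \<times> int"
  obtain a b c where t: "t = (a,b,c)" by (cases t) auto
  have len: "length u = d" using u by (rule Words_len)
  show "loc3 n p u (actT n d Q q (p + 1) v) t = R2 q (loc3 n p u v) t"
  proof (cases "a \<in> Idx n \<and> b \<in> Idx n \<and> c \<in> Idx n")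
    case False
    then show ?thesis using t by (auto simp: loc3_def R2_def)
  next
    case True
    have W: "L3 p u (a,b,c) \<in> Words n d" using L3_Words u p True by blast
    have e: "L3 p u (a,b,c) ! (p + 1 - 1) = b" "L3 p u (a,b,c) ! (p + 1) = c"
      "sw (p + 1) (L3 p u (a,b,c)) = L3 p u (a,c,b)"
      using p len by (auto simp: L3_def sw_def nth_list_update intro!: nth_equalityI)
    have p2: "1 \<le> p + 1" "p + 1 < d" using p by auto
    have F: "actT n d Q q (p + 1) v (L3 p u (a,b,c)) = (if b = c then inverse q * v (L3 p u (a,b,c))
       else if c < b then v (L3 p u (a,c,b)) + (inverse q - q) * v (L3 p u (a,b,c)) else v (L3 p u (a,c,b)))"
      using actT_pos[OF p2 W, of Q q v] e by simp
    show ?thesis using True t W F by (auto simp: loc3_def R2_def)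
  qed
qed

lemma braid_pos:
  assumes p: "1 \<le> p" "p + 1 < d" and q: "q \<noteq> 0"
  shows "actT n d Q q p (actT n d Q q (p + 1) (actT n d Q q p v)) =
         actT n d Q q (p + 1) (actT n d Q q p (actT n d Q q (p + 1) v))"
proof (rule ext)
  fix u
  show "actT n d Q q p (actT n d Q q (p + 1) (actT n d Q q p v)) u =
         actT n d Q q (p + 1) (actT n d Q q p (actT n d Q q (p + 1) v)) u"
  proof (cases "u \<in> Words n d")
    case False
    then show ?thesis by (simp add: actT_out)
  next
    case True
    have len: "length u = d" using True by (rule Words_len)
    define t where "t = (u ! (p - 1), u ! p, u ! (p + 1))"
    have uL: "L3 p u t = u" by (simp add: t_def L3_def)
    have tI: "u ! (p - 1) \<in> Idx n \<and> u ! p \<in> Idx n \<and> u ! (p + 1) \<in> Idx n"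
      using True p len by (auto simp: Words_def)
    have ev: "w u = loc3 n p u w t" for w :: "'a vec"
      using uL tI by (simp add: loc3_def t_def)
    show ?thesis
      unfolding ev loc3_T1[OF True p] loc3_T2[OF True p] using braid_loc[OF q] by simp
  qed
qed

lemma upd01a: "xs[0 := a, Suc 0 := b, 0 := c] = xs[0 := c, Suc 0 := b]"
  by (metis list_update_overwrite list_update_swap zero_neq_one One_nat_def)
lemma upd01b: "xs[0 := a, Suc 0 := b, 0 := c, Suc 0 := e] = xs[0 := c, Suc 0 := e]"
  by (metis list_update_overwrite list_update_swap zero_neq_one One_nat_def)

definition L2 :: "int list \<Rightarrow> int\<times>int \<Rightarrow> int list" where
  "L2 u t = (case t of (a,b) \<Rightarrow> u[0 := a, 1 := b])"
definition loc2 :: "nat \<Rightarrow> int list \<Rightarrow> 'k::field vec \<Rightarrow> int\<times>int \<Rightarrow> 'k" where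
  "loc2 n u v t = (case t of (a,b) \<Rightarrow> if a \<in> Idx n \<and> b \<in> Idx n then v (L2 u t) else 0)"

lemma L2_Words:
  assumes "u \<in> Words n d" "a \<in> Idx n" "b \<in> Idx n"
  shows "L2 u (a,b) \<in> Words n d"
  using assms unfolding Words_def L2_def
  by (auto dest!: set_update_subset_insert[THEN subsetD] simp: subset_iff)

lemma loc2_T0:
  assumes u: "u \<in> Words n d" and d: "1 < d"
  shows "loc2 n u (actT n d Q q 0 v) = K0 Q (loc2 n u v)"
proof (rule ext)
  fix t :: "int \<times> int"
  obtain a b where t: "t = (a,b)" by (cases t) auto
  have len: "length u = d" using u by (rule Words_len)
  show "loc2 n u (actT n d Q q 0 v) t = K0 Q (loc2 n u v) t"
  proof (cases "a \<in> Idx n \<and> b \<in> Idx n")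
    case False
    then show ?thesis using t by (auto simp: loc2_def K0_def Idx_neg)
  next
    case True
    have W: "L2 u (a,b) \<in> Words n d" using L2_Words u True by blast
    have e: "L2 u (a,b) ! 0 = a" "ng (L2 u (a,b)) = L2 u (-a,b)"
      using d len by (auto simp: L2_def ng_def nth_list_update upd01a upd01b)
    have d0: "0 < d" using d by auto
    show ?thesis using True t W e by (auto simp: loc2_def K0_def actT_zero[OF d0] Idx_neg)
  qed
qed

lemma loc2_T1:
  assumes u: "u \<in> Words n d" and d: "1 < d"
  shows "loc2 n u (actT n d Q q 1 v) = RR q (loc2 n u v)"
proof (rule ext)
  fix t :: "int \<times> int"
  obtain a b where t: "t = (a,b)" by (cases t) auto
  have len: "length u = d" using u by (rule Words_len)
  show "loc2 n u (actT n d Q q 1 v) t = RR q (loc2 n u v) t"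
  proof (cases "a \<in> Idx n \<and> b \<in> Idx n")
    case False
    then show ?thesis using t by (auto simp: loc2_def RR_def)
  next
    case True
    have W: "L2 u (a,b) \<in> Words n d" using L2_Words u True by blast
    have e: "L2 u (a,b) ! (1 - 1) = a" "L2 u (a,b) ! 1 = b" "sw 1 (L2 u (a,b)) = L2 u (b,a)"
      using d len by (auto simp: L2_def sw_def nth_list_update upd01a upd01b)
    have d1: "1 \<le> (1::nat)" "1 < d" using d by auto
    have F: "actT n d Q q 1 v (L2 u (a,b)) = (if a = b then inverse q * v (L2 u (a,b))
       else if b < a then v (L2 u (b,a)) + (inverse q - q) * v (L2 u (a,b)) else v (L2 u (b,a)))"
      using actT_pos[OF d1 W, of Q q v] e by simp
    show ?thesis using True t W F by (auto simp: loc2_def RR_def)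
  qed
qed

lemma typeB:
  assumes d: "1 < d" and q: "q \<noteq> 0" and Q: "Q \<noteq> 0"
  shows "actT n d Q q 0 (actT n d Q q 1 (actT n d Q q 0 (actT n d Q q 1 v))) =
         actT n d Q q 1 (actT n d Q q 0 (actT n d Q q 1 (actT n d Q q 0 v)))"
proof (rule ext)
  fix u
  show "actT n d Q q 0 (actT n d Q q 1 (actT n d Q q 0 (actT n d Q q 1 v))) u =
         actT n d Q q 1 (actT n d Q q 0 (actT n d Q q 1 (actT n d Q q 0 v))) u"
  proof (cases "u \<in> Words n d")
    case False
    then show ?thesis by (simp add: actT_out)
  next
    case True
    have len: "length u = d" using True by (rule Words_len)
    define t where "t = (u ! 0, u ! 1)"
    have uL: "L2 u t = u" by (simp add: t_def L2_def)
    have "u ! 0 \<in> set u" "u ! 1 \<in> set u" using d len by auto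
    then have tI: "u ! 0 \<in> Idx n \<and> u ! 1 \<in> Idx n"
      using True by (auto simp: Words_def)
    have ev: "w u = loc2 n u w t" for w :: "'a vec"
      using uL tI by (simp add: loc2_def t_def)
    show ?thesis
      unfolding ev loc2_T0[OF True d] loc2_T1[OF True d] using typeB_loc[OF q Q] by simp
  qed
qed

fun pr :: "'k::field list \<Rightarrow> ('k vec \<Rightarrow> 'k vec) \<Rightarrow> 'k vec \<Rightarrow> 'k vec" where
  "pr [] A v = v"
| "pr (r # rs) A v = A (pr rs A v) - sc r (pr rs A v)"

definition subsp :: "'k::field vec set \<Rightarrow> bool" where
  "subsp S \<longleftrightarrow> (\<forall>x y. x \<in> S \<longrightarrow> y \<in> S \<longrightarrow> x + y \<in> S) \<and> (\<forall>a x. x \<in> S \<longrightarrow> sc a x \<in> S)"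

lemma sc_add: "sc a (x + y) = sc a x + sc a y" by (auto simp: fun_eq_iff sc_apply algebra_simps)
lemma sc_diff: "sc a (x - y) = sc a x - sc a y" by (auto simp: fun_eq_iff sc_apply algebra_simps)
lemma sc_sc: "sc a (sc b x) = sc (a * b) x" by (auto simp: fun_eq_iff sc_apply algebra_simps)

lemma subsp_add: "subsp S \<Longrightarrow> x \<in> S \<Longrightarrow> y \<in> S \<Longrightarrow> x + y \<in> S" by (simp add: subsp_def)
lemma subsp_sc: "subsp S \<Longrightarrow> x \<in> S \<Longrightarrow> sc a x \<in> S" by (simp add: subsp_def)
lemma subsp_neg: "subsp S \<Longrightarrow> x \<in> S \<Longrightarrow> - x \<in> S"
proof -
  assume "subsp S" "x \<in> S"
  then have "sc (-1) x \<in> S" by (rule subsp_sc)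
  moreover have "sc (-1) x = - x" by (auto simp: fun_eq_iff sc_apply)
  ultimately show ?thesis by simp
qed
lemma subsp_diff: "subsp S \<Longrightarrow> x \<in> S \<Longrightarrow> y \<in> S \<Longrightarrow> x - y \<in> S"
  using subsp_add[of S x "- y"] subsp_neg[of S y] by simp

lemma lin_pr: "lin A \<Longrightarrow> lin (pr rs A)"
proof (induction rs)
  case Nil then show ?case by (simp add: lin_def)
next
  case (Cons r rs)
  then have l: "lin (pr rs A)" by simp
  have A: "lin A" by fact
  have sc_comm: "sc a (sc b z) = sc b (sc a z)" for a b z by (simp add: sc_sc mult.commute)
  show ?case unfolding lin_def
  proof (intro conjI allI)
    fix x y
    show "pr (r # rs) A (x + y) = pr (r # rs) A x + pr (r # rs) A y"
      by (simp only: pr.simps lin_add[OF l] lin_add[OF A] sc_add) (simp add: algebra_simps)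
  next
    fix a x
    show "pr (r # rs) A (sc a x) = sc a (pr (r # rs) A x)"
      by (simp only: pr.simps lin_sc[OF l] lin_sc[OF A] sc_diff sc_comm[of r a])
  qed
qed

lemma pr_closed: "subsp S \<Longrightarrow> (\<And>x. x \<in> S \<Longrightarrow> A x \<in> S) \<Longrightarrow> x \<in> S \<Longrightarrow> pr rs A x \<in> S"
  by (induction rs) (auto intro: subsp_diff subsp_sc)

lemma pr_append: "pr (rs @ ss) A v = pr rs A (pr ss A v)"
  by (induction rs) auto

lemma pr_comm: "lin B \<Longrightarrow> (\<And>v. B (A v) = A (B v)) \<Longrightarrow> B (pr rs A v) = pr rs A (B v)"
  by (induction rs) (auto simp: lin_diff lin_sc)

lemma pr_eigen: "A v = sc lam v \<Longrightarrow> lin A \<Longrightarrow> pr rs A v = sc (\<Prod>r\<leftarrow>rs. lam - r) v"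
proof (induction rs)
  case Nil then show ?case by (auto simp: fun_eq_iff sc_apply)
next
  case (Cons r rs)
  have "pr (r # rs) A v = A (sc (\<Prod>r\<leftarrow>rs. lam - r) v) - sc r (sc (\<Prod>r\<leftarrow>rs. lam - r) v)"
    using Cons by simp
  also have "\<dots> = sc (\<Prod>r\<leftarrow>rs. lam - r) (sc lam v) - sc r (sc (\<Prod>r\<leftarrow>rs. lam - r) v)"
    using Cons.prems by (simp add: lin_sc)
  finally show ?case by (simp add: fun_eq_iff sc_apply algebra_simps)
qed

lemma pr_scale:
  assumes B: "lin B" and s: "s \<noteq> 0"
  shows "pr rs (\<lambda>v. sc s (B v)) v = sc (s ^ length rs) (pr (map (\<lambda>r. r / s) rs) B v)"
proof (induction rs)
  case Nil then show ?case by (auto simp: fun_eq_iff sc_apply)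
next
  case (Cons r rs)
  let ?P = "s ^ length rs" and ?w = "pr (map (\<lambda>r. r / s) rs) B v"
  have "pr (r # rs) (\<lambda>v. sc s (B v)) v = sc s (B (sc ?P ?w)) - sc r (sc ?P ?w)"
    by (simp only: pr.simps Cons.IH)
  also have "\<dots> = sc s (sc ?P (B ?w)) - sc r (sc ?P ?w)" using B by (simp add: lin_sc)
  finally have eq: "pr (r # rs) (\<lambda>v. sc s (B v)) v = sc s (sc ?P (B ?w)) - sc r (sc ?P ?w)" .
  show ?case unfolding eq using s by (simp add: fun_eq_iff sc_apply field_simps)
qed

lemma pr_agree:
  assumes S: "subsp S" and C: "\<And>x. x \<in> S \<Longrightarrow> C x \<in> S" and AC: "\<And>x. x \<in> S \<Longrightarrow> A x = C x"
    and x: "x \<in> S"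
  shows "pr rs A x = pr rs C x"
proof (induction rs)
  case Nil then show ?case by simp
next
  case (Cons r rs)
  have "pr rs C x \<in> S" using pr_closed[OF S C x] .
  then show ?case using Cons.IH AC by simp
qed

lemma lin_scop: "lin (sc a)"
  by (simp add: lin_def sc_add sc_sc mult.commute)

lemma sc_sum: "sc a (\<Sum>k\<in>S. f k) = (\<Sum>k\<in>S. sc a (f k))"
  using lin_sum[OF lin_scop] .

lemma pr_coeffs:
  "\<exists>c N. \<forall>A. lin A \<longrightarrow> (\<forall>v. pr rs A v = (\<Sum>k<N. sc (c k) ((A ^^ k) v)))"
proof (induction rs)
  case Nil
  show ?case
    by (rule exI[of _ "\<lambda>_. 1"], rule exI[of _ 1]) (auto simp: fun_eq_iff sc_apply)
next
  case (Cons r rs)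
  then obtain c N where H: "\<forall>A. lin A \<longrightarrow> (\<forall>v. pr rs A v = (\<Sum>k<N. sc (c k) ((A ^^ k) v)))"
    by blast
  define c' where "c' k = (if k = 0 then 0 else c (k - 1)) - r * (if k < N then c k else 0)" for k
  show ?case
  proof (intro exI allI impI)
    fix A :: "'a vec \<Rightarrow> 'a vec" and v assume A: "lin A"
    have "pr (r # rs) A v = A (\<Sum>k<N. sc (c k) ((A ^^ k) v)) - sc r (\<Sum>k<N. sc (c k) ((A ^^ k) v))"
      using H A by simp
    also have "\<dots> = (\<Sum>k<N. sc (c k) ((A ^^ Suc k) v)) - (\<Sum>k<N. sc (r * c k) ((A ^^ k) v))"
      using A by (simp add: lin_sum lin_sc sc_sum sc_sc)
    also have "\<dots> = (\<Sum>k<Suc N. sc (c' k) ((A ^^ k) v))"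
    proof -
      have e1: "(\<Sum>k<N. sc (c k) ((A ^^ Suc k) v)) = (\<Sum>k<Suc N. sc (if k = 0 then 0 else c (k - 1)) ((A ^^ k) v))"
        by (subst sum.lessThan_Suc_shift) (simp add: fun_eq_iff sc_apply)
      have e2: "(\<Sum>k<N. sc (r * c k) ((A ^^ k) v)) = (\<Sum>k<Suc N. sc (r * (if k < N then c k else 0)) ((A ^^ k) v))"
        by (simp add: fun_eq_iff sc_apply)
      have sm: "sc (a - b) x = sc a x - sc b x" for a b x by (simp add: fun_eq_iff sc_apply algebra_simps)
      show ?thesis unfolding e1 e2 c'_def sm sum_subtractf by simp
    qed
    finally show "pr (r # rs) A v = (\<Sum>k<Suc N. sc (c' k) ((A ^^ k) v))" .
  qed
qed


lemma sc_zero_left: "sc 0 x = 0" by (simp add: fun_eq_iff sc_apply)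
lemma sc_zero_right: "sc a 0 = 0" by (simp add: fun_eq_iff sc_apply)
lemma sc_eq0: "sc a x = 0 \<Longrightarrow> a \<noteq> 0 \<Longrightarrow> x = 0" by (simp add: fun_eq_iff sc_apply)

context
  fixes T X Y :: "'k::field vec \<Rightarrow> 'k vec" and M :: "'k vec set" and q :: 'k
  assumes linT: "lin T" and linX: "lin X"
    and M: "subsp M" and TM: "\<And>v. T v \<in> M" and XM: "\<And>v. X v \<in> M"
    and quad: "\<And>v. v \<in> M \<Longrightarrow> T (T v) = v - sc (q - inverse q) (T v)"
    and Ydef: "\<And>v. Y v = T (X (T v))"
    and bB: "\<And>v. X (T (X (T v))) = T (X (T (X v)))"
    and q0: "q \<noteq> 0"
begin

lemmas Tl = lin_add[OF linT] lin_sc[OF linT] lin_diff[OF linT]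
lemmas Xl = lin_add[OF linX] lin_sc[OF linX] lin_diff[OF linX]

lemma linY: "lin Y"
  unfolding lin_def Ydef by (simp add: Tl Xl)

lemmas Yl = lin_add[OF linY] lin_sc[OF linY] lin_diff[OF linY]

lemma YM: "Y v \<in> M" using TM Ydef by simp

lemma XY: "X (Y v) = Y (X v)" using bB Ydef by simp

lemma zM: "0 \<in> M" using TM[of 0] lin_zero[OF linT] by simp

lemma b_lem:
  assumes w: "w \<in> M"
  shows "T (X w + Y w) = X (T w) + Y (T w)"
proof -
  let ?c = "q - inverse q"
  have h1: "T (Y w) = X (T w) - sc ?c (T (X (T w)))" using Ydef quad[OF XM] by simp
  have h2: "Y (T w) = T (X w) - sc ?c (T (X (T w)))"
    using Ydef quad[OF w] by (simp add: Tl Xl)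
  show ?thesis unfolding Tl(1) h1 h2 by (simp add: algebra_simps)
qed

lemma c_lem:
  assumes w: "w \<in> M"
  shows "T (X (Y w)) = X (Y (T w))"
proof -
  let ?c = "q - inverse q"
  have "T (X (Y w)) = T (T (X (T (X w))))" using Ydef bB by simp
  also have "\<dots> = X (T (X w)) - sc ?c (T (X (T (X w))))" using quad[OF XM] by simp
  finally have L: "T (X (Y w)) = X (T (X w)) - sc ?c (T (X (T (X w))))" .
  have "X (Y (T w)) = X (T (X (T (T w))))" using Ydef by simp
  also have "\<dots> = X (T (X w)) - sc ?c (X (T (X (T w))))"
    using quad[OF w] linX linT by (simp add: Tl Xl Yl)
  also have "\<dots> = X (T (X w)) - sc ?c (T (X (T (X w))))" using bB by simp
  finally show ?thesis using L by simp
qed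

lemma powM: "w \<in> M \<Longrightarrow> (A ^^ k) w \<in> M" if "\<And>v. A v \<in> M" for A
  using that by (cases k) auto

lemma newton:
  assumes w: "w \<in> M"
  shows "T ((X ^^ k) w + (Y ^^ k) w) = (X ^^ k) (T w) + (Y ^^ k) (T w)"
proof -
  define s where "s k w = (X ^^ k) w + (Y ^^ k) w" for k w
  have sM: "s k w \<in> M" for k using powM[OF XM w] powM[OF YM w] M by (simp add: s_def subsp_add)
  have rec: "s (Suc (Suc k)) u = X (s (Suc k) u) + Y (s (Suc k) u) - X (Y (s k u))" for k u
  proof -
    have "Y ((X ^^ Suc k) u) = X (Y ((X ^^ k) u))" using XY by simp
    then show ?thesis using linX linY by (simp add: s_def Tl Xl Yl algebra_simps)
  qed
  have "T (s k w) = s k (T w) \<and> T (s (Suc k) w) = s (Suc k) (T w)"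
  proof (induction k)
    case 0
    have "T (s 0 w) = s 0 (T w)" by (simp only: s_def funpow.simps(1) id_apply Tl(1))
    moreover have "T (s (Suc 0) w) = s (Suc 0) (T w)"
      using b_lem[OF w] by (simp only: s_def funpow.simps o_apply id_apply)
    ultimately show ?case by simp
  next
    case (Suc k)
    have "T (s (Suc (Suc k)) w) = T (X (s (Suc k) w) + Y (s (Suc k) w)) - T (X (Y (s k w)))"
      using rec linT by (simp add: Tl Xl Yl)
    also have "\<dots> = X (T (s (Suc k) w)) + Y (T (s (Suc k) w)) - X (Y (T (s k w)))"
      using b_lem[OF sM] c_lem[OF sM] by simp
    also have "\<dots> = s (Suc (Suc k)) (T w)" using Suc.IH rec by simp
    finally show ?case using Suc.IH by simp
  qed
  then show ?thesis by (simp add: s_def)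
qed

lemma comm_lem:
  assumes f: "\<And>v. v \<in> M \<Longrightarrow> pr rs X v = 0" and w: "w \<in> M"
  shows "T (pr rs Y w) = pr rs Y (T w)"
proof -
  obtain c N where H: "\<forall>A. lin A \<longrightarrow> (\<forall>v. pr rs A v = (\<Sum>k<N. sc (c k) ((A ^^ k) v)))"
    using pr_coeffs by blast
  have e: "pr rs X u + pr rs Y u = (\<Sum>k<N. sc (c k) ((X ^^ k) u + (Y ^^ k) u))" for u
    using H linX linY by (simp add: sc_add sum.distrib)
  have "T (pr rs X w + pr rs Y w) = (\<Sum>k<N. sc (c k) (T ((X ^^ k) w + (Y ^^ k) w)))"
    unfolding e using linT by (simp add: lin_sum[OF linT] Tl)
  also have "\<dots> = pr rs X (T w) + pr rs Y (T w)"
    unfolding e using newton[OF w] by simp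
  finally show ?thesis using f[OF w] f[OF TM] by simp
qed

lemma step:
  assumes f: "\<And>v. v \<in> M \<Longrightarrow> pr rs X v = 0" and m: "m \<in> M"
  shows "pr (map (\<lambda>r. r * q^2) rs @ map (\<lambda>r. r / q^2) rs @ rs) Y m = 0"
proof -
  define c where "c = q - inverse q"
  define F where "F = pr rs Y"
  define N where "N = F ` M"
  have linF: "lin F" unfolding F_def by (rule lin_pr[OF linY])
  have FM: "w \<in> M \<Longrightarrow> F w \<in> M" for w unfolding F_def by (rule pr_closed[OF M YM])
  have NM: "n \<in> N \<Longrightarrow> n \<in> M" for n unfolding N_def using FM by blast
  have subN: "subsp N"
    unfolding subsp_def N_def
  proof (intro conjI allI impI)
    fix x y assume "x \<in> F ` M" "y \<in> F ` M"
    then obtain a b where "a \<in> M" "b \<in> M" "x = F a" "y = F b" by auto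
    then show "x + y \<in> F ` M" using linF M by (auto simp: lin_add[OF linF] subsp_add intro!: image_eqI[of _ _ "a + b"])
  next
    fix a x assume "x \<in> F ` M"
    then obtain b where "b \<in> M" "x = F b" by auto
    then show "sc a x \<in> F ` M" using linF M by (auto simp: lin_sc[OF linF] subsp_sc intro!: image_eqI[of _ _ "sc a b"])
  qed
  have FY: "Y (F w) = F (Y w)" for w unfolding F_def by (rule pr_comm[OF linY]) simp
  have FT: "w \<in> M \<Longrightarrow> T (F w) = F (T w)" for w unfolding F_def using comm_lem[OF f] by blast
  have NY: "n \<in> N \<Longrightarrow> Y n \<in> N" for n using FY YM N_def by auto
  have NT: "n \<in> N \<Longrightarrow> T n \<in> N" for n using FT TM N_def by auto
  have f0: "v \<in> M \<Longrightarrow> pr (0 # rs) X v = 0" for v using f lin_zero[OF linX] by (simp add: sc_zero_left)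
  have TY: "n \<in> N \<Longrightarrow> T (Y n) = Y (T n)" for n
  proof -
    assume "n \<in> N"
    then obtain w where w: "w \<in> M" "n = F w" using N_def by auto
    have "T (pr (0 # rs) Y w) = pr (0 # rs) Y (T w)" using comm_lem[OF f0 w(1)] .
    then have "T (Y (F w)) = Y (F (T w))" by (simp add: F_def sc_zero_left)
    then show ?thesis using w FT by simp
  qed
  define Ti where "Ti w = T w + sc c w" for w
  have TiT: "w \<in> M \<Longrightarrow> Ti (T w) = w" for w using quad unfolding Ti_def c_def by simp
  have TTi: "w \<in> M \<Longrightarrow> T (Ti w) = w" for w using quad linT unfolding Ti_def c_def by (simp add: Tl Xl Yl)
  have Xinv: "w \<in> M \<Longrightarrow> X w = Ti (Y (Ti w))" for w using Ydef TTi TiT XM by simp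
  have N5: "n \<in> N \<Longrightarrow> X n = sc (1 + c^2) (Y n) + sc c (Y (T n))" for n
  proof -
    assume n: "n \<in> N"
    have e1: "X n = Ti (Y (T n) + sc c (Y n))" using Xinv[OF NM[OF n]] by (simp add: Ti_def Yl)
    have e2: "Ti (Y (T n) + sc c (Y n)) = T (Y (T n)) + sc c (T (Y n)) + sc c (Y (T n) + sc c (Y n))"
      by (simp add: Ti_def Tl)
    have e3: "T (Y (T n)) = Y n - sc c (Y (T n))"
      using TY[OF NT[OF n]] quad[OF NM[OF n]] by (simp add: c_def Yl)
    have e4: "T (Y n) = Y (T n)" using TY[OF n] .
    show ?thesis unfolding e1 e2 e3 e4 by (simp add: fun_eq_iff sc_apply power2_eq_square algebra_simps)
  qed
  define N2 where "N2 = {u \<in> N. T u = sc (- q) u}"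
  have subN2: "subsp N2"
    unfolding subsp_def N2_def using subN linT
    by (auto simp: subsp_add subsp_sc Tl sc_add sc_sc mult.commute)
  have N2N: "u \<in> N2 \<Longrightarrow> u \<in> N" for u by (simp add: N2_def)
  have N7: "u \<in> N2 \<Longrightarrow> X u = sc (inverse (q^2)) (Y u)" for u
  proof -
    assume u: "u \<in> N2"
    then have "X u = sc (1 + c^2) (Y u) + sc c (Y (sc (- q) u))" using N5 by (simp add: N2_def)
    also have "\<dots> = sc (inverse (q^2)) (Y u)"
      using linY q0 by (simp add: Yl fun_eq_iff sc_apply c_def field_simps power2_eq_square)
    finally show ?thesis .
  qed
  have N2Y: "u \<in> N2 \<Longrightarrow> Y u \<in> N2" for u
    using NY TY linY by (auto simp: N2_def Yl)
  have N6: "n \<in> N \<Longrightarrow> X n - sc (q^2) (Y n) \<in> N2" for n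
  proof -
    assume n: "n \<in> N"
    have eq: "X n - sc (q^2) (Y n) = sc (1 + c^2 - q^2) (Y n) + sc c (Y (T n))"
      using N5[OF n] by (simp add: fun_eq_iff sc_apply algebra_simps)
    have inN: "sc (1 + c^2 - q^2) (Y n) + sc c (Y (T n)) \<in> N"
      using subN NY NT n by (simp add: subsp_add subsp_sc)
    have "T (sc (1 + c^2 - q^2) (Y n) + sc c (Y (T n))) =
          sc (1 + c^2 - q^2) (Y (T n)) + sc c (Y n - sc c (Y (T n)))"
      using linT TY[OF n] TY[OF NT[OF n]] quad[OF NM[OF n]] linY
      by (simp add: Tl Xl Yl c_def)
    also have "\<dots> = sc (- q) (sc (1 + c^2 - q^2) (Y n) + sc c (Y (T n)))"
      using q0 by (simp add: fun_eq_iff sc_apply c_def field_simps power2_eq_square)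
    finally show ?thesis unfolding eq N2_def using inN by simp
  qed
  define Y' where "Y' v = sc (q^2) (Y v)" for v
  define Y'' where "Y'' v = sc (inverse (q^2)) (Y v)" for v
  have NY': "n \<in> N \<Longrightarrow> Y' n \<in> N" for n using NY subN by (simp add: Y'_def subsp_sc)
  have D: "n \<in> N \<Longrightarrow> pr ss X n - pr ss Y' n \<in> N2" for n ss
  proof (induction ss)
    case Nil
    have "0 \<in> N2"
      using zM lin_zero[OF linF] lin_zero[OF linT] by (force simp: N2_def N_def sc_zero_right)
    then show ?case by (simp only: pr.simps diff_self)
  next
    case (Cons r ss)
    let ?a = "pr ss X n" and ?b = "pr ss Y' n"
    have ab: "?a - ?b \<in> N2" using Cons.IH Cons.prems by blast
    have bN: "?b \<in> N" using pr_closed[OF subN NY' Cons.prems] .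
    have eq: "pr (r # ss) X n - pr (r # ss) Y' n = (X (?a - ?b) - sc r (?a - ?b)) + (X ?b - sc (q^2) (Y ?b))"
      using linX by (simp add: Y'_def Xl sc_diff algebra_simps)
    have i1: "X (?a - ?b) \<in> N2" unfolding N7[OF ab] by (rule subsp_sc[OF subN2 N2Y[OF ab]])
    have i2: "sc r (?a - ?b) \<in> N2" by (rule subsp_sc[OF subN2 ab])
    have i3: "X ?b - sc (q^2) (Y ?b) \<in> N2" using N6[OF bN] .
    show ?case unfolding eq by (rule subsp_add[OF subN2 subsp_diff[OF subN2 i1 i2] i3])
  qed
  have nN: "F m \<in> N" using m N_def by auto
  have b2: "pr rs Y' (F m) \<in> N2"
  proof -
    have "pr rs X (F m) - pr rs Y' (F m) \<in> N2" using D[OF nN] .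
    then have "- (pr rs X (F m) - pr rs Y' (F m)) \<in> N2" by (rule subsp_neg[OF subN2])
    then show ?thesis by (simp only: f[OF FM[OF m]] diff_0 minus_minus)
  qed
  have Y''N2: "x \<in> N2 \<Longrightarrow> Y'' x \<in> N2" for x using N2Y subN2 by (simp add: Y''_def subsp_sc)
  have N7': "x \<in> N2 \<Longrightarrow> X x = Y'' x" for x using N7 by (simp add: Y''_def)
  have "pr rs Y'' (pr rs Y' (F m)) = pr rs X (pr rs Y' (F m))"
    using pr_agree[OF subN2 Y''N2 N7' b2] by simp
  also have "\<dots> = 0" using f NM N2N b2 by blast
  finally have Z: "pr rs Y'' (pr rs Y' (F m)) = 0" .
  have q2: "q^2 \<noteq> 0" using q0 by simp
  have s1: "pr rs Y' w = sc ((q^2) ^ length rs) (pr (map (\<lambda>r. r / q^2) rs) Y w)" for w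
    unfolding Y'_def by (rule pr_scale[OF linY q2])
  have s2: "pr rs Y'' w = sc ((inverse (q^2)) ^ length rs) (pr (map (\<lambda>r. r * q^2) rs) Y w)" for w
  proof -
    have "pr rs Y'' w = sc ((inverse (q^2)) ^ length rs) (pr (map (\<lambda>r. r / inverse (q^2)) rs) Y w)"
      unfolding Y''_def by (rule pr_scale[OF linY]) (use q0 in simp)
    moreover have "(\<lambda>r. r / inverse (q^2)) = (\<lambda>r. r * q^2)" by (simp add: divide_inverse)
    ultimately show ?thesis by simp
  qed
  have "sc ((inverse (q^2)) ^ length rs) (sc ((q^2) ^ length rs)
          (pr (map (\<lambda>r. r * q^2) rs) Y (pr (map (\<lambda>r. r / q^2) rs) Y (F m)))) = 0"
    using Z unfolding s1 s2 lin_sc[OF lin_pr[OF linY]] .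
  then have "pr (map (\<lambda>r. r * q^2) rs) Y (pr (map (\<lambda>r. r / q^2) rs) Y (F m)) = 0"
    using q0 by (auto dest!: sc_eq0)
  then show ?thesis by (simp add: pr_append F_def)
qed

end


fun Kf :: "nat \<Rightarrow> nat \<Rightarrow> 'k::field \<Rightarrow> 'k \<Rightarrow> nat \<Rightarrow> 'k vec \<Rightarrow> 'k vec" where
  "Kf n d Q q 0 v = actT n d Q q 0 v"
| "Kf n d Q q (Suc j) v = actT n d Q q (Suc j) (Kf n d Q q j (actT n d Q q (Suc j) v))"

lemma actWord_append: "actWord n d Q q (as @ bs) v = actWord n d Q q bs (actWord n d Q q as v)"
  by (induction as arbitrary: v) auto

lemma Kword_Suc: "Kword (Suc (Suc j)) = Suc j # Kword (Suc j) @ [Suc j]"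
  by (simp add: Kword_def)

lemma actWord_K: "actWord n d Q q (Kword (Suc j)) v = Kf n d Q q j v"
proof (induction j arbitrary: v)
  case 0 then show ?case by (simp add: Kword_def)
next
  case (Suc j) then show ?case by (simp add: Kword_Suc actWord_append)
qed

lemma lin_Kf: "lin (Kf n d Q q j)"
proof (induction j)
  case 0
  have "Kf n d Q q 0 = actT n d Q q 0" by (rule ext) simp
  then show ?case using lin_actT by metis
next
  case (Suc j)
  have "Kf n d Q q (Suc j) = (\<lambda>v. actT n d Q q (Suc j) ((\<lambda>v. Kf n d Q q j (actT n d Q q (Suc j) v)) v))"
    by (rule ext) simp
  then show ?case using lin_comp[OF lin_actT lin_comp[OF Suc.IH lin_actT]] by metis
qed

lemma Kf_Vspace: "Kf n d Q q j v \<in> Vspace n d"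
  by (cases j) (simp_all add: actT_Vspace)

lemma Vspace_subsp: "subsp (Vspace n d)"
  by (simp add: subsp_def Vspace_def sc_apply)

lemma commK:
  assumes "j + 2 \<le> m" "m < d" "q \<noteq> 0"
  shows "actT n d Q q m (Kf n d Q q j v) = Kf n d Q q j (actT n d Q q m v)"
  using assms
proof (induction j arbitrary: v)
  case 0
  then show ?case using comm_zero[of m d n Q q v] by simp
next
  case (Suc j)
  have c: "actT n d Q q m (actT n d Q q (Suc j) w) = actT n d Q q (Suc j) (actT n d Q q m w)" for w
    using comm_pos[of "Suc j" m d q n Q w] Suc.prems by simp
  show ?case using c Suc.IH[of "actT n d Q q (Suc j) v"] Suc.IH[of v] Suc.prems by simp
qed

lemma bBK:
  assumes "j + 1 < d" "q \<noteq> 0" "Q \<noteq> 0"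
  shows "Kf n d Q q j (actT n d Q q (Suc j) (Kf n d Q q j (actT n d Q q (Suc j) v))) =
         actT n d Q q (Suc j) (Kf n d Q q j (actT n d Q q (Suc j) (Kf n d Q q j v)))"
  using assms
proof (induction j arbitrary: v)
  case 0
  then show ?case using typeB[of d q Q n v] by simp
next
  case (Suc j)
  define a where "a = actT n d Q q (Suc j)"
  define b where "b = actT n d Q q (Suc (Suc j))"
  define K where "K = Kf n d Q q j"
  have KS: "Kf n d Q q (Suc j) w = a (K (a w))" for w by (simp add: a_def K_def)
  have br: "a (b (a w)) = b (a (b w))" for w
    unfolding a_def b_def using braid_pos[of "Suc j" d q n Q w] Suc.prems by simp
  have cm: "b (K w) = K (b w)" for w
    unfolding b_def K_def using commK[of j "Suc (Suc j)" d q n Q w] Suc.prems by simp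
  have ih: "K (a (K (a w))) = a (K (a (K w)))" for w
    unfolding a_def K_def using Suc.IH[of w] Suc.prems by simp
  have L: "a (K (a (b (a (K (a (b v))))))) = a (b (a (K (a (K (b (a v)))))))"
  proof -
    have "a (K (a (b (a (K (a (b v))))))) = a (K (b (a (b (K (a (b v)))))))" by (simp only: br)
    also have "\<dots> = a (b (K (a (b (K (a (b v)))))))" by (simp only: cm[of "a (b (K (a (b v))))"])
    also have "\<dots> = a (b (K (a (K (b (a (b v)))))))" by (simp only: cm[of "a (b v)"])
    also have "\<dots> = a (b (K (a (K (a (b (a v)))))))" by (simp only: br)
    also have "\<dots> = a (b (a (K (a (K (b (a v)))))))" by (simp only: ih)
    finally show ?thesis .
  qed
  have R: "b (a (K (a (b (a (K (a v))))))) = a (b (a (K (a (K (b (a v)))))))"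
  proof -
    have "b (a (K (a (b (a (K (a v))))))) = b (a (K (b (a (b (K (a v)))))))" by (simp only: br)
    also have "\<dots> = b (a (b (K (a (b (K (a v)))))))" by (simp only: cm[of "a (b (K (a v)))"])
    also have "\<dots> = b (a (b (K (a (K (b (a v)))))))" by (simp only: cm[of "a v"])
    also have "\<dots> = a (b (a (K (a (K (b (a v)))))))" by (simp only: br)
    finally show ?thesis .
  qed
  show ?case unfolding KS using L R by (simp add: b_def)
qed

fun rts :: "'k::field \<Rightarrow> 'k \<Rightarrow> nat \<Rightarrow> 'k list" where
  "rts Q q 0 = [inverse Q, - Q]"
| "rts Q q (Suc j) = map (\<lambda>r. r * q^2) (rts Q q j) @ map (\<lambda>r. r / q^2) (rts Q q j) @ rts Q q j"

lemma ann:
  assumes "j < d" "q \<noteq> 0" "Q \<noteq> 0" "v \<in> Vspace n d"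
  shows "pr (rts Q q j) (Kf n d Q q j) v = 0"
  using assms
proof (induction j arbitrary: v)
  case 0
  have qz: "actT n d Q q 0 (actT n d Q q 0 v) = v - sc (Q - inverse Q) (actT n d Q q 0 v)"
    using quad_zero[of d v n Q q] 0 by simp
  have "pr (rts Q q 0) (Kf n d Q q 0) v =
    actT n d Q q 0 (actT n d Q q 0 v) + sc Q (actT n d Q q 0 v) - sc (inverse Q) (actT n d Q q 0 v) - sc (inverse Q * Q) v"
    using lin_actT[of n d Q q 0] by (simp add: lin_diff lin_sc sc_diff sc_sc fun_eq_iff sc_apply algebra_simps)
  also have "\<dots> = 0" unfolding qz using 0 by (simp add: fun_eq_iff sc_apply algebra_simps)
  finally show ?case .
next
  case (Suc j)
  have jd: "j < d" using Suc.prems by simp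
  have f: "pr (rts Q q j) (Kf n d Q q j) w = 0" if "w \<in> Vspace n d" for w
    by (rule Suc.IH[OF jd Suc.prems(2) Suc.prems(3) that])
  have p: "1 \<le> Suc j" "Suc j < d" using Suc.prems by auto
  have Y: "Kf n d Q q (Suc j) w = actT n d Q q (Suc j) (Kf n d Q q j (actT n d Q q (Suc j) w))" for w
    by simp
  have B: "Kf n d Q q j (actT n d Q q (Suc j) (Kf n d Q q j (actT n d Q q (Suc j) w))) =
         actT n d Q q (Suc j) (Kf n d Q q j (actT n d Q q (Suc j) (Kf n d Q q j w)))" for w
    using bBK[of j d q Q n w] Suc.prems by simp
  have "pr (map (\<lambda>r. r * q^2) (rts Q q j) @ map (\<lambda>r. r / q^2) (rts Q q j) @ rts Q q j) (Kf n d Q q (Suc j)) v = 0"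
    by (rule step[OF lin_actT lin_Kf Vspace_subsp actT_Vspace Kf_Vspace quad_pos[OF p(1) p(2) _ Suc.prems(2)] Y B Suc.prems(2) f Suc.prems(4)])
  then show ?case by (simp only: rts.simps)
qed

lemma rts_good:
  assumes "q \<noteq> 0" "r \<in> set (rts Q q j)"
  shows "\<exists>k::int. \<bar>k\<bar> < int (Suc j) \<and> (r = - Q * q powi (2 * k) \<or> r = inverse Q * q powi (2 * k))"
  using assms(2)
proof (induction j arbitrary: r)
  case 0
  then show ?case by (intro exI[of _ 0]) auto
next
  case (Suc j)
  have up: "q powi (2 * k) * q^2 = q powi (2 * (k + 1))" for k :: int
    using assms(1) by (simp add: power_int_add distrib_left)
  have dn: "q powi (2 * k) / q^2 = q powi (2 * (k - 1))" for k :: int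
    using assms(1) by (simp add: power_int_diff right_diff_distrib)
  from Suc.prems consider (a) r0 where "r0 \<in> set (rts Q q j)" "r = r0 * q^2"
    | (b) r0 where "r0 \<in> set (rts Q q j)" "r = r0 / q^2" | (c) "r \<in> set (rts Q q j)"
    by auto
  then show ?case
  proof cases
    case (a r0)
    then obtain k where k: "\<bar>k\<bar> < int (Suc j)" "r0 = - Q * q powi (2 * k) \<or> r0 = inverse Q * q powi (2 * k)"
      using Suc.IH by blast
    have "r = - Q * (q powi (2 * k) * q^2) \<or> r = inverse Q * (q powi (2 * k) * q^2)"
      using k(2) a(2) by (auto simp: mult.assoc)
    then have "r = - Q * q powi (2 * (k + 1)) \<or> r = inverse Q * q powi (2 * (k + 1))"
      unfolding up .
    then show ?thesis using k(1) by (intro exI[of _ "k + 1"]) auto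
  next
    case (b r0)
    then obtain k where k: "\<bar>k\<bar> < int (Suc j)" "r0 = - Q * q powi (2 * k) \<or> r0 = inverse Q * q powi (2 * k)"
      using Suc.IH by blast
    have "r = - Q * (q powi (2 * k) / q^2) \<or> r = inverse Q * (q powi (2 * k) / q^2)"
      using k(2) b(2) by auto
    then have "r = - Q * q powi (2 * (k - 1)) \<or> r = inverse Q * q powi (2 * (k - 1))"
      unfolding dn .
    then show ?thesis using k(1) by (intro exI[of _ "k - 1"]) auto
  next
    case c
    then obtain k where k: "\<bar>k\<bar> < int (Suc j)" "r = - Q * q powi (2 * k) \<or> r = inverse Q * q powi (2 * k)"
      using Suc.IH by blast
    show ?thesis by (rule exI[of _ k]) (use k in auto)
  qed
qed

theorem proposition2p5:
  fixes Q q lam :: "'k::field" and n d i :: nat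
  assumes "Q \<noteq> 0" and "q \<noteq> 0" and "n \<ge> 1" and "d \<ge> 1"
    and "1 \<le> i" and "i \<le> d"
    and "is_eigenvalue_K n d Q q i lam"
  shows "\<exists>j::int. \<bar>j\<bar> < int i \<and>
           (lam = - Q * q powi (2 * j) \<or> lam = inverse Q * q powi (2 * j))"
proof -
  obtain j where ij: "i = Suc j" using assms(5) by (cases i) auto
  have jd: "j < d" using ij assms(6) by simp
  obtain v where v: "v \<in> Vspace n d" "v \<noteq> (\<lambda>_. 0)" "actWord n d Q q (Kword i) v = (\<lambda>u. lam * v u)"
    using assms(7) unfolding is_eigenvalue_K_def by blast
  have ev: "Kf n d Q q j v = sc lam v" using v(3) unfolding ij actWord_K by (simp add: sc_def)
  have "sc (\<Prod>r\<leftarrow>rts Q q j. lam - r) v = 0"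
    using pr_eigen[OF ev lin_Kf] ann[OF jd assms(2) assms(1) v(1)] by simp
  moreover have "v \<noteq> 0" using v(2) by (simp add: zero_fun_def)
  ultimately have "(\<Prod>r\<leftarrow>rts Q q j. lam - r) = 0" using sc_eq0 by blast
  then obtain r where r: "r \<in> set (rts Q q j)" "lam = r"
    by (auto simp: prod_list_zero_iff)
  then show ?thesis using rts_good[OF assms(2) r(1)] ij by auto
qed

end
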